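(* Let $0<1/N_0,1/D_0,1/C_0\ll1/r\le1/3$ with $r\in\mathbb N$. Let $N\ge N_0$, $C\ge C_0$, $D\ge D_0$, and let $\mathcal H$ be an $N$-vertex linear multi-hypergraph with maximum degree $\Delta(\mathcal H)\le D$ in which every edge has size at most $r$. Then there is an $r$-uniform linear hypergraph $\mathcal H_{\mathrm{unif}}$ such that: (1) $\mathcal H\subseteq\mathcal H_{\mathrm{unif}}|_{V(\mathcal H)}$ and $\mathcal H_{\mathrm{unif}}|_{V(\mathcal H)}\setminus\mathcal H$ contains only singleton edges; (2) every $v\in V(\mathcal H_{\mathrm{unif}})$ satisfies $D-C\le d_{\mathcal H_{\mathrm{unif}}}(v)\le D$, and moreover every $v\in V(\mathcal H)$ with $d_{\mathcal H}(v)\ge D-C$ satisfies $d_{\mathcal H_{\mathrm{unif}}}(v)=d_{\mathcal H}(v)$; (3) $|V(\mathcal H_{\mathrm{unif}})|\le r(r-1)^2D^3N$.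
   Context: A multi-hypergraph has a finite vertex set and a multiset of nonempty edges. A linear multi-hypergraph is one in which any two distinct edges of size at least two intersect in at most one vertex (so only singleton edges may be repeated); a linear hypergraph has no repeated edges. Degree $d_{\mathcal H}(v)$ is the number of edges (with multiplicity) containing $v$; $r$-uniform means all edges have size $r$. For $S\subseteq V(\mathcal H')$, $\mathcal H'|_S$ is the multi-hypergraph on vertex set $S$ with edge multiset $\{e\cap S: e\in\mathcal H',\ e\cap S\ne\varnothing\}$. Hierarchy: $N_0,D_0,C_0$ sufficiently large in terms of $r$. *)

theory Defs
  imports Main "HOL-Library.Multiset"
begin

definition multi_hypergraph :: "'a set \<Rightarrow> 'a set multiset \<Rightarrow> bool" where
  "multi_hypergraph V E \<longleftrightarrow> finite V \<and> (\<forall>e\<in>#E. e \<noteq> {} \<and> e \<subseteq> V)"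

text \<open>Linear multi-hypergraph: any two distinct edges (distinct members of the
multiset, so two copies of the same edge count as distinct) of size at least two
meet in at most one vertex; hence only singleton edges may be repeated.\<close>
definition linear_multi_hypergraph :: "'a set \<Rightarrow> 'a set multiset \<Rightarrow> bool" where
  "linear_multi_hypergraph V E \<longleftrightarrow> multi_hypergraph V E \<and>
     (\<forall>e\<in>#E. \<forall>f\<in>#E. 2 \<le> card e \<longrightarrow> 2 \<le> card f \<longrightarrow> e \<noteq> f \<longrightarrow> card (e \<inter> f) \<le> 1) \<and>
     (\<forall>e\<in>#E. 2 \<le> card e \<longrightarrow> count E e = 1)"

definition linear_hypergraph :: "'a set \<Rightarrow> 'a set multiset \<Rightarrow> bool" where
  "linear_hypergraph V E \<longleftrightarrow> linear_multi_hypergraph V E \<and> (\<forall>e. count E e \<le> 1)"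

definition hdeg :: "'a set multiset \<Rightarrow> 'a \<Rightarrow> nat" where
  "hdeg E v = size (filter_mset (\<lambda>e. v \<in> e) E)"

definition uniform :: "nat \<Rightarrow> 'a set multiset \<Rightarrow> bool" where
  "uniform r E \<longleftrightarrow> (\<forall>e\<in>#E. card e = r)"

definition restrict_edges :: "'a set multiset \<Rightarrow> 'a set \<Rightarrow> 'a set multiset" where
  "restrict_edges E S = image_mset (\<lambda>e. e \<inter> S) (filter_mset (\<lambda>e. e \<inter> S \<noteq> {}) E)"

end

theory Submission
  imports Defs "HOL-Library.Nat_Bijection" "HOL-Library.Countable_Set"
begin

lemma hdeg_image_mset_set:
  assumes "finite I"
  shows "hdeg (image_mset ed (mset_set I)) w = card {x\<in>I. w \<in> ed x}"
  unfolding hdeg_def using assms by (simp add: filter_mset_image_mset)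

lemma count_image_inj_le1:
  assumes "finite I" "inj_on ed I"
  shows "count (image_mset ed (mset_set I)) e \<le> 1"
proof -
  have "count (image_mset ed (mset_set I)) e = card (ed -` {e} \<inter> I)"
    using assms(1) by (simp add: count_image_mset)
  also have "\<dots> \<le> 1"
  proof -
    have "finite (ed -` {e} \<inter> I)" using assms(1) by simp
    moreover have "\<forall>x\<in>ed -` {e} \<inter> I. \<forall>y\<in>ed -` {e} \<inter> I. x = y"
      using assms(2) by (auto simp: inj_on_def)
    ultimately show ?thesis using card_le_Suc0_iff_eq by (metis One_nat_def)
  qed
  finally show ?thesis .
qed

lemma dvd_small_zero:
  fixes x :: int assumes "q dvd x" "\<bar>x\<bar> < q" shows "x = 0"
proof (rule ccontr)
  assume "x \<noteq> 0"
  hence "\<bar>q\<bar> \<le> \<bar>x\<bar>" using assms(1) by (rule dvd_imp_le_int)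
  thus False using assms(2) by linarith
qed

lemma mod_eq_int_dvd:
  fixes x y q :: nat assumes "x mod q = y mod q" shows "int q dvd int x - int y"
proof -
  have "int x mod int q = int y mod int q" using assms by (metis of_nat_mod)
  thus ?thesis by (simp add: mod_eq_dvd_iff)
qed

lemma gadget_arith:
  fixes a a' s s' i j q D r :: nat
  assumes "q = r * D" "a < q" "a' < q" "s < D" "s' < D" "i < r" "j < r" "i \<noteq> j"
    "(a + s*i) mod q = (a' + s'*i) mod q" "(a + s*j) mod q = (a' + s'*j) mod q"
  shows "a = a' \<and> s = s'"
proof -
  have h1: "int q dvd (int a + int s * int i) - (int a' + int s' * int i)"
    using mod_eq_int_dvd[OF assms(9)] by simp
  have h2: "int q dvd (int a + int s * int j) - (int a' + int s' * int j)"
    using mod_eq_int_dvd[OF assms(10)] by simp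
  have "int q dvd ((int a + int s * int i) - (int a' + int s' * int i)) - ((int a + int s * int j) - (int a' + int s' * int j))"
    using h1 h2 by (rule dvd_diff)
  moreover have "((int a + int s * int i) - (int a' + int s' * int i)) - ((int a + int s * int j) - (int a' + int s' * int j)) = (int s - int s') * (int i - int j)"
    by (simp add: algebra_simps)
  ultimately have d: "int q dvd (int s - int s') * (int i - int j)" by simp
  have "\<bar>int s - int s'\<bar> < int D" "\<bar>int i - int j\<bar> < int r" using assms by auto
  hence "\<bar>(int s - int s') * (int i - int j)\<bar> < int D * int r"
    by (simp add: abs_mult mult_strict_mono')
  hence "\<bar>(int s - int s') * (int i - int j)\<bar> < int q" using assms(1) by (simp add: mult.commute)
  with d have "(int s - int s') * (int i - int j) = 0"
    by (rule dvd_small_zero)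
  hence ss: "s = s'" using assms(8) by simp
  have "int q dvd int a - int a'" using h1 ss by (simp add: algebra_simps)
  moreover have "int a < int q" "int a' < int q" using assms(2,3) by (simp_all only: of_nat_less_iff)
  hence "\<bar>int a - int a'\<bar> < int q" by linarith
  ultimately have "int a - int a' = 0" by (rule dvd_small_zero)
  thus ?thesis using ss by simp
qed


definition gv :: "nat \<Rightarrow> nat \<Rightarrow> nat \<Rightarrow> 'a + nat" where
  "gv \<sigma> i x = Inr (list_encode [\<sigma>, i, x])"

lemma gv_eq[simp]: "gv \<sigma> i x = gv \<sigma>' i' x' \<longleftrightarrow> \<sigma> = \<sigma>' \<and> i = i' \<and> x = x'"
  by (simp add: gv_def list_encode_eq)

lemma gv_Inl[simp]: "gv \<sigma> i x \<noteq> Inl v" "Inl v \<noteq> gv \<sigma> i x"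
  by (simp_all add: gv_def)

lemma arith_bound:
  fixes r D :: nat assumes "3 \<le> r" "10 \<le> D"
  shows "1 + 2 * r^3 * D^2 \<le> r * (r - 1)^2 * D^3"
proof -
  have a: "2 * r \<le> 3 * (r - 1)" using assms by simp
  have b: "(2*r)^2 \<le> (3*(r-1))^2" using a by (rule power_mono) simp
  hence "4 * r^2 \<le> 9 * (r-1)^2" by (simp add: power_mult_distrib)
  hence c: "4 * r^3 * D^3 \<le> 9 * (r * (r-1)^2 * D^3)"
    using mult_le_mono1[of "4 * r^2" "9 * (r-1)^2" "r * D^3"] by (simp add: power3_eq_cube power2_eq_square algebra_simps)
  have d: "40 * r^3 * D^2 \<le> 4 * r^3 * D^3"
    using mult_le_mono1[of 10 D "4 * r^3 * D^2"] assms by (simp add: power3_eq_cube power2_eq_square algebra_simps)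
  have e: "1 \<le> r^3 * D^2" using assms by simp
  from c d e show ?thesis by linarith
qed

locale constr =
  fixes r D C :: nat and V :: "'a set" and E :: "'a set multiset"
  assumes r3: "3 \<le> r" and D10: "10 \<le> D" and C1: "1 \<le> C"
    and lin: "linear_multi_hypergraph V E" and degV: "\<forall>v\<in>V. hdeg E v \<le> D"
    and cardE: "\<forall>e\<in>#E. card e \<le> r"
begin

definition "q = r * D"
definition "EB = {e. e \<in># E \<and> 2 \<le> card e}"
definition "ext v = (if hdeg E v < D - C then D - hdeg E v else 0)"
definition "t v = count E {v} + ext v"
definition "S = {(v,k). v \<in> V \<and> k < t v}"
definition "S0 = {(v,k). v \<in> V \<and> k < count E {v}}"
definition "ge \<sigma> a s = (\<lambda>i. gv \<sigma> i ((a + s*i) mod q)) ` {..<r}"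
definition "pe e = Inl ` e \<union> (\<lambda>j. gv (list_encode [0, to_nat_on EB e, j]) 0 0) ` {..<r - card e}"
definition "se v k = insert (Inl v) ((\<lambda>j. gv (list_encode [1, to_nat_on V v, k, j]) 0 0) ` {..<r-1})"
definition "Slots = (\<lambda>(e,j). list_encode [0, to_nat_on EB e, j]) ` (EB \<times> {..<r})
   \<union> (\<lambda>((v,k),j). list_encode [1, to_nat_on V v, k, j]) ` (S \<times> {..<r})"
definition "G = Slots \<times> {..<q} \<times> {..<D-1}"
definition "I = Inr ` G \<union> Inl ` (Inl ` EB \<union> Inr ` S)"
definition "ed x = (case x of Inr (\<sigma>,a,s) \<Rightarrow> ge \<sigma> a s | Inl (Inl e) \<Rightarrow> pe e | Inl (Inr (v,k)) \<Rightarrow> se v k)"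
definition "F = image_mset ed (mset_set I)"
definition "U = Inl ` V \<union> (\<lambda>(\<sigma>,i,x). gv \<sigma> i x) ` (Slots \<times> {..<r} \<times> {..<q})"

lemma finV: "finite V" using lin by (simp add: linear_multi_hypergraph_def multi_hypergraph_def)
lemma E_sub: "e \<in># E \<Longrightarrow> e \<subseteq> V \<and> e \<noteq> {}" using lin by (simp add: linear_multi_hypergraph_def multi_hypergraph_def)
lemma finEB: "finite EB" unfolding EB_def by (rule finite_subset[of _ "set_mset E"]) auto
lemma EB_sub: "e \<in> EB \<Longrightarrow> e \<subseteq> V \<and> 2 \<le> card e \<and> card e \<le> r \<and> e \<in># E"
  using E_sub cardE by (auto simp: EB_def)
lemma t_le: "v \<in> V \<Longrightarrow> t v \<le> D"
proof -
  assume v: "v \<in> V"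
  have "count E {v} \<le> hdeg E v"
  proof -
    have "count E {v} = count (filter_mset (\<lambda>e. v \<in> e) E) {v}" by simp
    also have "\<dots> \<le> size (filter_mset (\<lambda>e. v \<in> e) E)" by (rule count_le_size)
    finally show ?thesis by (simp add: hdeg_def)
  qed
  thus ?thesis using degV v by (auto simp: t_def ext_def)
qed
lemma finS: "finite S"
proof -
  have "S \<subseteq> V \<times> {..<D}" using t_le by (force simp: S_def)
  thus ?thesis using finV by (meson finite_SigmaI finite_lessThan finite_subset)
qed
lemma finSlots: "finite Slots" using finEB finS by (simp add: Slots_def)
lemma finG: "finite G" using finSlots by (simp add: G_def)
lemma finI: "finite I" using finG finEB finS by (simp add: I_def)
lemma q_pos: "q > 0" using r3 D10 by (simp add: q_def)

lemma card_ge: "card (ge \<sigma> a s) = r"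
  unfolding ge_def by (subst card_image) (auto simp: inj_on_def)
lemma card_pe: assumes "e \<in> EB" shows "card (pe e) = r"
proof -
  have fe: "finite e" using EB_sub[OF assms] finV finite_subset by blast
  have "card (pe e) = card (Inl ` e :: ('a + nat) set) + card ((\<lambda>j. gv (list_encode [0, to_nat_on EB e, j]) 0 0 :: 'a + nat) ` {..<r - card e})"
    unfolding pe_def by (rule card_Un_disjoint) (use fe in auto)
  also have "\<dots> = card e + (r - card e)"
    by (subst card_image, simp, subst card_image) (auto simp: inj_on_def)
  finally show ?thesis using EB_sub[OF assms] by simp
qed
lemma card_se: "card (se v k) = r"
proof -
  have "card (se v k) = Suc (card ((\<lambda>j. gv (list_encode [1, to_nat_on V v, k, j]) 0 0 :: 'a + nat) ` {..<r-1}))"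
    unfolding se_def by (rule card_insert_disjoint) auto
  also have "\<dots> = Suc (r - 1)" by (subst card_image) (auto simp: inj_on_def)
  finally show ?thesis using r3 by simp
qed
lemma card_ed: "x \<in> I \<Longrightarrow> card (ed x) = r"
  by (auto simp: I_def ed_def card_ge card_pe card_se)


lemma card_le1I: "finite A \<Longrightarrow> (\<And>u u'. u \<in> A \<Longrightarrow> u' \<in> A \<Longrightarrow> u = u') \<Longrightarrow> card A \<le> 1"
  using card_le_Suc0_iff_eq by (metis One_nat_def)

lemma fin_ed: "x \<in> I \<Longrightarrow> finite (ed x)"
  using card_ed r3 by (metis card.infinite not_numeral_le_zero)

lemma Slots_q: "(\<sigma>,a,s) \<in> G \<Longrightarrow> a < q \<and> s < D - 1"
  by (auto simp: G_def)

lemma gg_same: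
  assumes "a < q" "a' < q" "s < D - 1" "s' < D - 1" "(a,s) \<noteq> (a',s')"
    "u \<in> ge \<sigma> a s \<inter> ge \<sigma> a' s'" "u' \<in> ge \<sigma> a s \<inter> ge \<sigma> a' s'"
  shows "u = u'"
proof -
  obtain i where i: "i < r" "u = gv \<sigma> i ((a + s*i) mod q)" using assms(6) by (auto simp: ge_def)
  obtain j where j: "j < r" "u' = gv \<sigma> j ((a + s*j) mod q)" using assms(7) by (auto simp: ge_def)
  have ei: "(a + s*i) mod q = (a' + s'*i) mod q" using assms(6) i by (auto simp: ge_def)
  have ej: "(a + s*j) mod q = (a' + s'*j) mod q" using assms(7) j by (auto simp: ge_def)
  have "i = j"
  proof (rule ccontr)
    assume "i \<noteq> j"
    from gadget_arith[OF q_def assms(1,2) _ _ i(1) j(1) this ei ej] assms(3,4,5) show False by auto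
  qed
  thus ?thesis using i j by simp
qed

lemma lin_EB: "e \<in> EB \<Longrightarrow> e' \<in> EB \<Longrightarrow> e \<noteq> e' \<Longrightarrow> card (e \<inter> e') \<le> 1"
  using lin by (auto simp: linear_multi_hypergraph_def EB_def)

lemma ed_lin:
  assumes "x \<in> I" "y \<in> I" "x \<noteq> y"
  shows "card (ed x \<inter> ed y) \<le> 1"
proof -
  have fin: "finite (ed x \<inter> ed y)" using fin_ed assms(1) by blast
  have cV: "countable V" using finV by (simp add: countable_finite)
  have cEB: "countable EB" using finEB by (simp add: countable_finite)
  show ?thesis
  proof (cases x)
    case (Inr gx)
    then obtain \<sigma> a s where gx: "x = Inr (\<sigma>,a,s)" "(\<sigma>,a,s) \<in> G" using assms(1) by (auto simp: I_def)
    show ?thesis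
    proof (cases y)
      case (Inr gy)
      then obtain \<sigma>' a' s' where gy: "y = Inr (\<sigma>',a',s')" "(\<sigma>',a',s') \<in> G" using assms(2) by (auto simp: I_def)
      show ?thesis
      proof (cases "\<sigma> = \<sigma>'")
        case True
        show ?thesis
          apply (rule card_le1I[OF fin])
          using gg_same[of a a' s s' _ \<sigma>] gx gy assms(3) True Slots_q[OF gx(2)] Slots_q[OF gy(2)] by (auto simp: ed_def)
      next
        case False
        have "ed x \<inter> ed y = {}" using gx gy False by (auto simp: ed_def ge_def)
        thus ?thesis by simp
      qed
    next
      case (Inl z)
      show ?thesis
        apply (rule card_le1I[OF fin])
        using gx Inl assms(2) by (auto simp: ed_def ge_def pe_def se_def I_def)
    qed
  next
    case (Inl z)
    show ?thesis
    proof (cases y)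
      case (Inr gy)
      then obtain \<sigma>' a' s' where gy: "y = Inr (\<sigma>',a',s')" "(\<sigma>',a',s') \<in> G" using assms(2) by (auto simp: I_def)
      show ?thesis
        apply (rule card_le1I[OF fin])
        using gy Inl assms(1) by (auto simp: ed_def ge_def pe_def se_def I_def)
    next
      case (Inl z')
      show ?thesis
      proof (cases z)
        case (Inl e)
        with \<open>x = Inl z\<close> have xe: "x = Inl (Inl e)" "e \<in> EB" using assms(1) by (auto simp: I_def)
        show ?thesis
        proof (cases z')
          case (Inl e')
          with \<open>y = Inl z'\<close> have ye: "y = Inl (Inl e')" "e' \<in> EB" using assms(2) by (auto simp: I_def)
          have ne: "e \<noteq> e'" using xe ye assms(3) by simp
          have "ed x \<inter> ed y \<subseteq> Inl ` (e \<inter> e')"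
            using xe ye ne cEB by (auto simp: ed_def pe_def)
          hence "card (ed x \<inter> ed y) \<le> card (Inl ` (e \<inter> e') :: ('a + nat) set)"
            using EB_sub[OF xe(2)] finV by (intro card_mono) (auto intro: finite_subset)
          also have "\<dots> = card (e \<inter> e')" by (simp add: card_image)
          also have "\<dots> \<le> 1" using lin_EB xe ye ne by simp
          finally show ?thesis .
        next
          case (Inr vk)
          with \<open>y = Inl z'\<close> obtain v k where ye: "y = Inl (Inr (v,k))" using assms(2) by (auto simp: I_def)
          show ?thesis
            apply (rule card_le1I[OF fin])
            using xe ye by (auto simp: ed_def pe_def se_def)
        qed
      next
        case (Inr vk)
        with \<open>x = Inl z\<close> obtain v k where xe: "x = Inl (Inr (v,k))" "(v,k) \<in> S" using assms(1) by (auto simp: I_def)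
        show ?thesis
        proof (cases z')
          case (Inl e')
          with \<open>y = Inl z'\<close> have ye: "y = Inl (Inl e')" using assms(2) by (auto simp: I_def)
          show ?thesis
            apply (rule card_le1I[OF fin])
            using xe ye by (auto simp: ed_def pe_def se_def)
        next
          case (Inr vk')
          with \<open>y = Inl z'\<close> obtain v' k' where ye: "y = Inl (Inr (v',k'))" "(v',k') \<in> S" using assms(2) by (auto simp: I_def)
          have ne: "(v,k) \<noteq> (v',k')" using xe ye assms(3) by auto
          have vV: "v \<in> V" "v' \<in> V" using xe ye by (auto simp: S_def)
          show ?thesis
            apply (rule card_le1I[OF fin])
            using xe ye ne vV cV by (auto simp: ed_def se_def)
        qed
      qed
    qed
  qed
qed


lemma gv_U: "\<sigma> \<in> Slots \<Longrightarrow> i < r \<Longrightarrow> x < q \<Longrightarrow> gv \<sigma> i x \<in> U"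
  unfolding U_def by (rule UnI2, rule image_eqI[where x="(\<sigma>,i,x)"]) auto

lemma Inl_U: "v \<in> V \<Longrightarrow> Inl v \<in> U" unfolding U_def by simp

lemma ed_sub_U: assumes "x \<in> I" shows "ed x \<subseteq> U"
proof -
  have r0: "0 < r" using r3 by simp
  show ?thesis
  proof (cases x)
    case (Inr g)
    then obtain \<sigma> a s where g: "x = Inr (\<sigma>,a,s)" "\<sigma> \<in> Slots" using assms by (auto simp: I_def G_def)
    show ?thesis using g q_pos by (auto simp: ed_def ge_def intro!: gv_U)
  next
    case (Inl z)
    show ?thesis
    proof (cases z)
      case (Inl e)
      with \<open>x = Inl z\<close> have xe: "x = Inl (Inl e)" "e \<in> EB" using assms by (auto simp: I_def)
      have sl: "list_encode [0, to_nat_on EB e, j] \<in> Slots" if "j < r - card e" for j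
        unfolding Slots_def using xe(2) that by (intro UnI1, intro image_eqI[where x="(e,j)"]) auto
      show ?thesis using xe EB_sub[OF xe(2)] r0 q_pos sl by (auto simp: ed_def pe_def simp del: list_encode.simps intro!: gv_U Inl_U)
    next
      case (Inr vk)
      with \<open>x = Inl z\<close> obtain v k where xe: "x = Inl (Inr (v,k))" "(v,k) \<in> S" using assms by (auto simp: I_def)
      have sl: "list_encode [1, to_nat_on V v, k, j] \<in> Slots" if "j < r - 1" for j
        unfolding Slots_def using xe(2) that by (intro UnI2, intro image_eqI[where x="((v,k),j)"]) auto
      show ?thesis using xe r0 q_pos sl by (auto simp: ed_def se_def S_def simp del: list_encode.simps intro!: gv_U Inl_U)
    qed
  qed
qed

lemma inj_ed: "inj_on ed I"
proof (rule inj_onI)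
  fix x y assume xy: "x \<in> I" "y \<in> I" "ed x = ed y"
  show "x = y"
  proof (rule ccontr)
    assume "x \<noteq> y"
    hence "card (ed x \<inter> ed y) \<le> 1" using ed_lin xy by blast
    thus False using xy card_ed r3 by simp
  qed
qed

lemma finU: "finite U" using finV finSlots by (simp add: U_def)

lemma F_linear: "linear_hypergraph U F"
proof -
  have cnt: "count F e \<le> 1" for e unfolding F_def by (rule count_image_inj_le1[OF finI inj_ed])
  have mem: "e \<in># F \<Longrightarrow> \<exists>x\<in>I. e = ed x" for e unfolding F_def using finI by (simp add: image_iff)
  have ne: "ed x \<noteq> {}" if "x \<in> I" for x
  proof
    assume "ed x = {}"
    hence "card (ed x) = 0" by simp
    thus False using card_ed[OF that] r3 by simp
  qed
  have A: "\<forall>e\<in>#F. e \<noteq> {} \<and> e \<subseteq> U"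
  proof
    fix e assume "e \<in># F"
    then obtain x where "x \<in> I" "e = ed x" using mem by blast
    thus "e \<noteq> {} \<and> e \<subseteq> U" using ne ed_sub_U by simp
  qed
  have B: "\<forall>e\<in>#F. \<forall>f\<in>#F. 2 \<le> card e \<longrightarrow> 2 \<le> card f \<longrightarrow> e \<noteq> f \<longrightarrow> card (e \<inter> f) \<le> 1"
  proof (intro ballI impI)
    fix e f assume "e \<in># F" "f \<in># F" "e \<noteq> f"
    then obtain x y where "x \<in> I" "e = ed x" "y \<in> I" "f = ed y" using mem by meson
    thus "card (e \<inter> f) \<le> 1" using ed_lin \<open>e \<noteq> f\<close> by blast
  qed
  have C: "\<forall>e\<in>#F. 2 \<le> card e \<longrightarrow> count F e = 1"
  proof (intro ballI impI)
    fix e assume "e \<in># F"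
    hence "0 < count F e" by simp
    thus "count F e = 1" using cnt[of e] by linarith
  qed
  show ?thesis
    unfolding linear_hypergraph_def linear_multi_hypergraph_def multi_hypergraph_def
    apply (intro conjI)
        apply (rule finU)
       apply (rule A)
      apply (rule B)
     apply (rule C)
    apply (rule allI, rule cnt)
    done
qed

lemma F_uniform: "uniform r F"
  unfolding uniform_def
proof
  fix e assume "e \<in># F"
  then obtain x where "x \<in> I" "e = ed x" unfolding F_def using finI by (auto simp: image_iff)
  thus "card e = r" using card_ed by simp
qed


lemma hdeg_F: "hdeg F w = card {x\<in>I. w \<in> ed x}"
  unfolding F_def by (rule hdeg_image_mset_set[OF finI])

lemma singleton_of_card: "finite e \<Longrightarrow> v \<in> e \<Longrightarrow> card e < 2 \<Longrightarrow> e = {v}"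
proof -
  assume "finite e" "v \<in> e" "card e < 2"
  hence "card e \<le> Suc 0" by simp
  hence "\<forall>a\<in>e. \<forall>b\<in>e. a = b" using card_le_Suc0_iff_eq[OF \<open>finite e\<close>] by blast
  thus "e = {v}" using \<open>v \<in> e\<close> by blast
qed

lemma hdeg_E_split: assumes "v \<in> V" shows "hdeg E v = card {e\<in>EB. v \<in> e} + count E {v}"
proof -
  have "filter_mset (\<lambda>e. v \<in> e) E = filter_mset (\<lambda>e. v \<in> e \<and> 2 \<le> card e) E + filter_mset (\<lambda>e. e = {v}) E"
  proof (rule multiset_eqI)
    fix e
    show "count (filter_mset (\<lambda>e. v \<in> e) E) e = count (filter_mset (\<lambda>e. v \<in> e \<and> 2 \<le> card e) E + filter_mset (\<lambda>e. e = {v}) E) e"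
    proof (cases "e \<in># E")
      case True
      hence "finite e" using E_sub finV finite_subset by blast
      hence imp: "v \<in> e \<and> \<not> 2 \<le> card e \<Longrightarrow> e = {v}" using singleton_of_card[of e v] by simp
      show ?thesis
      proof (cases "e = {v}")
        case True thus ?thesis by simp
      next
        case False
        hence "(v \<in> e) = (v \<in> e \<and> 2 \<le> card e)" using imp by blast
        thus ?thesis using False by simp
      qed
    next
      case False
      thus ?thesis by (auto simp: not_in_iff)
    qed
  qed
  also have "filter_mset (\<lambda>e. v \<in> e \<and> 2 \<le> card e) E = mset_set {e\<in>EB. v \<in> e}"
  proof (rule multiset_eqI)
    fix e
    have c1: "e \<in># E \<Longrightarrow> 2 \<le> card e \<Longrightarrow> count E e = 1" using lin by (simp add: linear_multi_hypergraph_def)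
    have "finite {e\<in>EB. v \<in> e}" using finEB by simp
    hence "count (mset_set {e\<in>EB. v \<in> e}) e = (if e \<in> EB \<and> v \<in> e then 1 else 0)"
      by (simp add: count_mset_set')
    thus "count (filter_mset (\<lambda>e. v \<in> e \<and> 2 \<le> card e) E) e = count (mset_set {e\<in>EB. v \<in> e}) e"
      using c1 by (auto simp: EB_def not_in_iff)
  qed
  finally show ?thesis unfolding hdeg_def by (simp add: filter_eq_replicate_mset)
qed

lemma deg_Inl: assumes "v \<in> V" shows "hdeg F (Inl v) = hdeg E v + ext v"
proof -
  have eq: "{x\<in>I. Inl v \<in> ed x} = Inl ` Inl ` {e\<in>EB. v \<in> e} \<union> Inl ` Inr ` ({v} \<times> {..<t v})"
  proof (rule set_eqI)
    fix x
    show "x \<in> {x\<in>I. Inl v \<in> ed x} \<longleftrightarrow> x \<in> Inl ` Inl ` {e\<in>EB. v \<in> e} \<union> Inl ` Inr ` ({v} \<times> {..<t v})"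
    proof (cases x)
      case (Inr g) thus ?thesis by (auto simp: ed_def ge_def simp del: list_encode.simps)
    next
      case (Inl z)
      show ?thesis
      proof (cases z)
        case (Inl e) thus ?thesis using \<open>x = Inl z\<close> by (auto simp: I_def ed_def pe_def simp del: list_encode.simps)
      next
        case (Inr vk) thus ?thesis using \<open>x = Inl z\<close> assms by (auto simp: I_def ed_def se_def S_def simp del: list_encode.simps)
      qed
    qed
  qed
  have "card {x\<in>I. Inl v \<in> ed x} = card (Inl ` Inl ` {e\<in>EB. v \<in> e} :: (('a set + 'a \<times> nat) + nat \<times> nat \<times> nat) set) + card (Inl ` Inr ` ({v} \<times> {..<t v}) :: (('a set + 'a \<times> nat) + nat \<times> nat \<times> nat) set)"
    unfolding eq by (rule card_Un_disjoint) (use finEB in auto)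
  also have "\<dots> = card {e\<in>EB. v \<in> e} + t v"
    by (simp add: card_image inj_on_def card_cartesian_product)
  finally show ?thesis using hdeg_F hdeg_E_split[OF assms] by (simp add: t_def)
qed


definition "fa x i s = nat ((int x - int s * int i) mod int q)"

lemma fa_props: "fa x i s < q \<and> (fa x i s + s*i) mod q = x" if "x < q"
proof -
  have qp: "int q > 0" using q_pos by simp
  have nn: "(int x - int s * int i) mod int q \<ge> 0" using qp by simp
  have i1: "int (fa x i s) = (int x - int s * int i) mod int q" unfolding fa_def using nn by simp
  have "int (fa x i s) < int q" unfolding i1 using qp by simp
  moreover have "int ((fa x i s + s*i) mod q) = int x"
  proof -
    have "int ((fa x i s + s*i) mod q) = (int (fa x i s) + int s * int i) mod int q" by (simp add: zmod_int)
    also have "\<dots> = ((int x - int s * int i) mod int q + int s * int i) mod int q" by (simp add: i1)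
    also have "\<dots> = (int x - int s * int i + int s * int i) mod int q" by (simp add: mod_add_left_eq)
    also have "\<dots> = int x" using that by simp
    finally show ?thesis .
  qed
  ultimately show ?thesis by simp
qed

lemma fa_unique: assumes "x < q" "a < q" "(a + s*i) mod q = x" shows "a = fa x i s"
proof -
  have "(a + s*i) mod q = (fa x i s + s*i) mod q" using fa_props[OF assms(1)] assms(3) by simp
  hence "int q dvd int (a + s*i) - int (fa x i s + s*i)" by (rule mod_eq_int_dvd)
  hence d: "int q dvd int a - int (fa x i s)" by simp
  have "int a < int q" "int (fa x i s) < int q" using assms(2) fa_props[OF assms(1)] by simp_all
  hence "\<bar>int a - int (fa x i s)\<bar> < int q" by linarith
  with d have "int a - int (fa x i s) = 0" by (intro dvd_small_zero)
  thus ?thesis by simp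
qed

lemma deg_gv:
  assumes "\<sigma> \<in> Slots" "i < r" "x < q"
  shows "D - 1 \<le> hdeg F (gv \<sigma> i x) \<and> hdeg F (gv \<sigma> i x) \<le> D"
proof -
  let ?w = "gv \<sigma> i x :: 'a + nat"
  define P1 where "P1 = (Inr ` ((\<lambda>s. (\<sigma>, fa x i s, s)) ` {..<D-1}) :: (('a set + 'a \<times> nat) + nat \<times> nat \<times> nat) set)"
  define P2 where "P2 = {y\<in>I. ?w \<in> ed y \<and> (\<exists>z. y = Inl z)}"
  have eq: "{y\<in>I. ?w \<in> ed y} = P1 \<union> P2"
  proof (rule set_eqI)
    fix y
    show "y \<in> {y\<in>I. ?w \<in> ed y} \<longleftrightarrow> y \<in> P1 \<union> P2"
    proof (cases y)
      case (Inl z) thus ?thesis by (auto simp: P1_def P2_def)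
    next
      case (Inr g)
      obtain \<sigma>' a s where g: "g = (\<sigma>',a,s)" by (cases g) auto
      have "y \<in> {y\<in>I. ?w \<in> ed y} \<longleftrightarrow> \<sigma>' \<in> Slots \<and> a < q \<and> s < D - 1 \<and> \<sigma>' = \<sigma> \<and> (a + s*i) mod q = x"
        using Inr g assms by (auto simp: I_def G_def ed_def ge_def)
      also have "\<dots> \<longleftrightarrow> \<sigma>' = \<sigma> \<and> s < D - 1 \<and> a = fa x i s"
        using assms fa_props[OF assms(3)] fa_unique[OF assms(3)] by blast
      also have "\<dots> \<longleftrightarrow> y \<in> P1 \<union> P2" using Inr g by (auto simp: P1_def P2_def)
      finally show ?thesis .
    qed
  qed
  have cP1: "card P1 = D - 1"
    unfolding P1_def by (subst card_image, simp, subst card_image) (auto simp: inj_on_def)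
  have fP2: "finite P2" unfolding P2_def using finI by simp
  have cEB: "countable EB" using finEB by (simp add: countable_finite)
  have cV: "countable V" using finV by (simp add: countable_finite)
  have cP2: "card P2 \<le> 1"
  proof (rule card_le1I[OF fP2])
    fix y y' assume yy: "y \<in> P2" "y' \<in> P2"
    show "y = y'"
      using yy cEB cV by (auto simp: P2_def I_def ed_def pe_def se_def S_def list_encode_eq simp del: list_encode.simps)
  qed
  have dis: "P1 \<inter> P2 = {}" by (auto simp: P1_def P2_def)
  have "hdeg F ?w = card P1 + card P2"
    unfolding hdeg_F eq by (rule card_Un_disjoint) (use fP2 dis in \<open>auto simp: P1_def\<close>)
  thus ?thesis using cP1 cP2 D10 by linarith
qed


lemma count_img_mset_set: "finite A \<Longrightarrow> count (image_mset g (mset_set A)) X = card {a\<in>A. g a = X}"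
  by (simp add: count_image_mset Int_def conj_commute vimage_def)

lemma E_decomp: "E = mset_set EB + image_mset (\<lambda>(v,k). {v}) (mset_set S0)"
proof (rule multiset_eqI)
  fix X
  have fS0: "finite S0"
  proof -
    have "S0 \<subseteq> S" by (auto simp: S0_def S_def t_def)
    thus ?thesis using finS finite_subset by blast
  qed
  have c2: "count (image_mset (\<lambda>(v,k). {v}) (mset_set S0)) X = card {a\<in>S0. (\<lambda>(v,k). {v}) a = X}"
    by (rule count_img_mset_set[OF fS0])
  have c1: "count (mset_set EB) X = (if X \<in> EB then 1 else 0)" using finEB by (simp add: count_mset_set')
  show "count E X = count (mset_set EB + image_mset (\<lambda>(v,k). {v}) (mset_set S0)) X"
  proof (cases "\<exists>v0. X = {v0}")
    case False
    hence "{a\<in>S0. (\<lambda>(v,k). {v}) a = X} = {}" by auto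
    hence "card {a\<in>S0. (\<lambda>(v,k). {v}) a = X} = 0" by (simp only: card.empty)
    moreover have "count E X = (if X \<in> EB then 1 else 0)"
    proof (cases "X \<in># E")
      case True
      hence "finite X" "X \<noteq> {}" using E_sub finV finite_subset by blast+
      then obtain v where "v \<in> X" by blast
      hence "2 \<le> card X" using singleton_of_card[OF \<open>finite X\<close> \<open>v \<in> X\<close>] False by force
      thus ?thesis using True lin by (simp add: EB_def linear_multi_hypergraph_def)
    next
      case False thus ?thesis by (simp add: EB_def not_in_iff)
    qed
    ultimately show ?thesis using c1 c2 by simp
  next
    case True
    then obtain v0 where X: "X = {v0}" by blast
    have nEB: "X \<notin> EB" using X by (simp add: EB_def)
    have "{a\<in>S0. (\<lambda>(v,k). {v}) a = X} = (if v0 \<in> V then {v0} \<times> {..<count E X} else {})"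
      using X by (auto simp: S0_def)
    moreover have "v0 \<notin> V \<Longrightarrow> count E X = 0"
      using X E_sub by (auto simp: not_in_iff[symmetric])
    ultimately show ?thesis using c1 c2 nEB by (simp add: card_cartesian_product)
  qed
qed


definition "S1 = {(v,k). v \<in> V \<and> count E {v} \<le> k \<and> k < t v}"

lemma restrict_F:
  "restrict_edges F (Inl ` V) = image_mset (image Inl) E + image_mset (\<lambda>(v,k). {Inl v}) (mset_set S1)"
proof -
  let ?f = "\<lambda>x. ed x \<inter> Inl ` V"
  have "S0 \<subseteq> S" by (auto simp: S0_def S_def t_def)
  hence fS0: "finite S0" using finS finite_subset by blast
  have "S1 \<subseteq> S" by (auto simp: S1_def S_def)
  hence fS1: "finite S1" using finS finite_subset by blast
  have R1: "restrict_edges F (Inl ` V) = image_mset ?f (mset_set {x\<in>I. ed x \<inter> Inl ` V \<noteq> {}})"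
    unfolding restrict_edges_def F_def filter_mset_image_mset filter_mset_mset_set[OF finI]
    by (simp add: image_mset.compositionality o_def)
  have R2: "{x\<in>I. ed x \<inter> Inl ` V \<noteq> {}} = Inl ` Inl ` EB \<union> Inl ` Inr ` S"
  proof (rule set_eqI)
    fix x
    show "x \<in> {x\<in>I. ed x \<inter> Inl ` V \<noteq> {}} \<longleftrightarrow> x \<in> Inl ` Inl ` EB \<union> Inl ` Inr ` S"
    proof (cases x)
      case (Inr g) thus ?thesis by (auto simp: ed_def ge_def I_def simp del: list_encode.simps)
    next
      case (Inl z)
      show ?thesis
      proof (cases z)
        case (Inl e)
        have "e \<in> EB \<Longrightarrow> e \<inter> V \<noteq> {}" using EB_sub E_sub by blast
        thus ?thesis using \<open>x = Inl z\<close> Inl by (auto simp: I_def ed_def pe_def simp del: list_encode.simps)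
      next
        case (Inr vk) thus ?thesis using \<open>x = Inl z\<close> by (auto simp: I_def ed_def se_def S_def simp del: list_encode.simps)
      qed
    qed
  qed
  have SU: "S = S0 \<union> S1" by (auto simp: S_def S0_def S1_def t_def)
  have SD: "S0 \<inter> S1 = {}" by (auto simp: S0_def S1_def)
  have M: "mset_set (Inl ` Inl ` EB \<union> Inl ` Inr ` S :: (('a set + 'a \<times> nat) + nat \<times> nat \<times> nat) set) = image_mset (Inl \<circ> Inl) (mset_set EB) + image_mset (Inl \<circ> Inr) (mset_set S0) + image_mset (Inl \<circ> Inr) (mset_set S1)"
  proof -
    have "mset_set (Inl ` Inl ` EB \<union> Inl ` Inr ` S) = mset_set (Inl ` Inl ` EB) + mset_set (Inl ` Inr ` S0 \<union> Inl ` Inr ` S1 :: (('a set + 'a \<times> nat) + nat \<times> nat \<times> nat) set)"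
      unfolding SU image_Un by (rule mset_set_Union) (use finEB fS0 fS1 in auto)
    also have "mset_set (Inl ` Inr ` S0 \<union> Inl ` Inr ` S1 :: (('a set + 'a \<times> nat) + nat \<times> nat \<times> nat) set) = mset_set (Inl ` Inr ` S0) + mset_set (Inl ` Inr ` S1)"
      by (rule mset_set_Union) (use fS0 fS1 SD in auto)
    also have "mset_set (Inl ` Inl ` EB :: (('a set + 'a \<times> nat) + nat \<times> nat \<times> nat) set) = image_mset (Inl \<circ> Inl) (mset_set EB)"
      by (subst image_mset_mset_set) (auto simp: inj_on_def image_comp)
    also have "mset_set (Inl ` Inr ` S0 :: (('a set + 'a \<times> nat) + nat \<times> nat \<times> nat) set) = image_mset (Inl \<circ> Inr) (mset_set S0)"
      by (subst image_mset_mset_set) (auto simp: inj_on_def image_comp)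
    also have "mset_set (Inl ` Inr ` S1 :: (('a set + 'a \<times> nat) + nat \<times> nat \<times> nat) set) = image_mset (Inl \<circ> Inr) (mset_set S1)"
      by (subst image_mset_mset_set) (auto simp: inj_on_def image_comp)
    finally show ?thesis by (simp add: add.assoc o_def)
  qed
  have f1: "image_mset (?f \<circ> (Inl \<circ> Inl)) (mset_set EB) = image_mset (image Inl) (mset_set EB)"
  proof (rule image_mset_cong)
    fix e assume "e \<in># mset_set EB"
    hence "e \<in> EB" using finEB by simp
    thus "(?f \<circ> (Inl \<circ> Inl)) e = Inl ` e" using EB_sub by (auto simp: ed_def pe_def simp del: list_encode.simps)
  qed
  have f2: "image_mset (?f \<circ> (Inl \<circ> Inr)) (mset_set A) = image_mset (\<lambda>(v,k). {Inl v}) (mset_set A)" if "A \<subseteq> S" "finite A" for A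
  proof (rule image_mset_cong)
    fix vk assume "vk \<in># mset_set A"
    hence "vk \<in> S" using that by auto
    thus "(?f \<circ> (Inl \<circ> Inr)) vk = (\<lambda>(v,k). {Inl v}) vk" by (auto simp: ed_def se_def S_def simp del: list_encode.simps)
  qed
  have f3: "image_mset (image Inl) (image_mset (\<lambda>(v,k). {v}) (mset_set S0)) = image_mset (\<lambda>(v,k). {Inl v}) (mset_set S0)"
    by (simp add: image_mset.compositionality o_def case_prod_beta')
  have E_img: "image_mset (image Inl) E = image_mset (image Inl) (mset_set EB) + image_mset (\<lambda>(v,k). {Inl v}) (mset_set S0)"
  proof -
    have "image_mset (image Inl) E = image_mset (image Inl) (mset_set EB) + image_mset (image Inl) (image_mset (\<lambda>(v,k). {v}) (mset_set S0))"
      using arg_cong[OF E_decomp, of "image_mset (image Inl)"] by (simp only: image_mset_union)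
    thus ?thesis by (simp only: f3)
  qed
  have S0S: "S0 \<subseteq> S" "S1 \<subseteq> S" using SU by auto
  show ?thesis
    unfolding R1 R2 M image_mset_union image_mset.compositionality f1 f2[OF S0S(1) fS0] f2[OF S0S(2) fS1] E_img
    by (simp add: add.assoc)
qed


lemma card_EB: "card EB \<le> card V * D"
proof -
  have "EB \<subseteq> (\<Union>v\<in>V. {e\<in>EB. v \<in> e})" using EB_sub E_sub by blast
  hence "card EB \<le> card (\<Union>v\<in>V. {e\<in>EB. v \<in> e})"
    using finEB finV by (intro card_mono) auto
  also have "\<dots> \<le> (\<Sum>v\<in>V. card {e\<in>EB. v \<in> e})" by (rule card_UN_le[OF finV])
  also have "\<dots> \<le> (\<Sum>v\<in>V. D)"
  proof (rule sum_mono)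
    fix v assume "v \<in> V"
    thus "card {e\<in>EB. v \<in> e} \<le> D" using hdeg_E_split degV by fastforce
  qed
  finally show ?thesis by simp
qed

lemma card_S: "card S \<le> card V * D"
proof -
  have "S \<subseteq> V \<times> {..<D}" using t_le by (force simp: S_def)
  hence "card S \<le> card (V \<times> {..<D})" using finV by (intro card_mono) auto
  thus ?thesis by (simp add: card_cartesian_product)
qed

lemma card_Slots: "card Slots \<le> 2 * r * card V * D"
proof -
  have "card Slots \<le> card ((\<lambda>(e,j). list_encode [0, to_nat_on EB e, j]) ` (EB \<times> {..<r})) + card ((\<lambda>((v,k),j). list_encode [1, to_nat_on V v, k, j]) ` (S \<times> {..<r}))"
    unfolding Slots_def by (rule card_Un_le)
  also have "\<dots> \<le> card (EB \<times> {..<r}) + card (S \<times> {..<r})"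
    by (intro add_mono card_image_le) (use finEB finS in auto)
  also have "\<dots> = card EB * r + card S * r" by (simp add: card_cartesian_product)
  also have "\<dots> \<le> card V * D * r + card V * D * r"
    by (intro add_mono mult_right_mono card_EB card_S) auto
  finally show ?thesis by (simp add: algebra_simps)
qed

lemma card_U: "card U \<le> r * (r - 1)^2 * D^3 * card V"
proof -
  have "card U \<le> card (Inl ` V :: ('a + nat) set) + card ((\<lambda>(\<sigma>,i,x). gv \<sigma> i x :: 'a + nat) ` (Slots \<times> {..<r} \<times> {..<q}))"
    unfolding U_def by (rule card_Un_le)
  also have "\<dots> \<le> card V + card (Slots \<times> {..<r} \<times> {..<q})"
    by (intro add_mono card_image_le) (use finV finSlots in auto)
  also have "\<dots> = card V + card Slots * r * q" by (simp add: card_cartesian_product)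
  also have "\<dots> \<le> card V + (2 * r * card V * D) * r * (r * D)"
    unfolding q_def by (intro add_mono mult_right_mono card_Slots) auto
  also have "\<dots> = card V * (1 + 2 * r^3 * D^2)" by (simp add: power3_eq_cube power2_eq_square algebra_simps)
  also have "\<dots> \<le> card V * (r * (r - 1)^2 * D^3)" by (rule mult_le_mono2[OF arith_bound[OF r3 D10]])
  finally show ?thesis by (simp add: algebra_simps)
qed


lemma main:
  "\<exists>(U :: ('a + nat) set) F.
       linear_hypergraph U F \<and> uniform r F \<and> Inl ` V \<subseteq> U \<and>
       image_mset (image Inl) E \<subseteq># restrict_edges F (Inl ` V) \<and>
       (\<forall>e\<in># restrict_edges F (Inl ` V) - image_mset (image Inl) E. card e = 1) \<and>
       (\<forall>v\<in>U. D - C \<le> hdeg F v \<and> hdeg F v \<le> D) \<and>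
       (\<forall>v\<in>V. hdeg E v \<ge> D - C \<longrightarrow> hdeg F (Inl v) = hdeg E v) \<and>
       card U \<le> r * (r - 1)^2 * D^3 * card V"
proof (intro exI conjI)
  show "linear_hypergraph U F" by (rule F_linear)
  show "uniform r F" by (rule F_uniform)
  show "Inl ` V \<subseteq> U" by (auto simp: U_def)
  show "image_mset (image Inl) E \<subseteq># restrict_edges F (Inl ` V)"
    unfolding restrict_F by simp
  have fS1: "finite S1"
  proof -
    have "S1 \<subseteq> S" by (auto simp: S1_def S_def)
    thus ?thesis using finS finite_subset by blast
  qed
  show "\<forall>e\<in># restrict_edges F (Inl ` V) - image_mset (image Inl) E. card e = 1"
    unfolding restrict_F using fS1 by auto
  show "\<forall>v\<in>U. D - C \<le> hdeg F v \<and> hdeg F v \<le> D"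
  proof
    fix w assume "w \<in> U"
    then consider (a) v where "v \<in> V" "w = Inl v" | (b) \<sigma> i x where "\<sigma> \<in> Slots" "i < r" "x < q" "w = gv \<sigma> i x"
      unfolding U_def by auto
    thus "D - C \<le> hdeg F w \<and> hdeg F w \<le> D"
    proof cases
      case a
      thus ?thesis using deg_Inl[OF a(1)] degV by (auto simp: ext_def)
    next
      case b
      thus ?thesis using deg_gv[OF b(1-3)] C1 by auto
    qed
  qed
  show "\<forall>v\<in>V. hdeg E v \<ge> D - C \<longrightarrow> hdeg F (Inl v) = hdeg E v"
    using deg_Inl by (auto simp: ext_def)
  show "card U \<le> r * (r - 1)^2 * D^3 * card V" by (rule card_U)
qed

end

theorem lemma4p4:
  fixes r :: nat
  assumes "3 \<le> r"
  shows "\<exists>N0 D0 C0 :: nat. \<forall>N D C :: nat. \<forall>(V :: 'a set) E.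
    N \<ge> N0 \<longrightarrow> C \<ge> C0 \<longrightarrow> D \<ge> D0 \<longrightarrow>
    card V = N \<longrightarrow> linear_multi_hypergraph V E \<longrightarrow>
    (\<forall>v\<in>V. hdeg E v \<le> D) \<longrightarrow> (\<forall>e\<in>#E. card e \<le> r) \<longrightarrow>
    (\<exists>(U :: ('a + nat) set) F.
       linear_hypergraph U F \<and> uniform r F \<and> Inl ` V \<subseteq> U \<and>
       image_mset (image Inl) E \<subseteq># restrict_edges F (Inl ` V) \<and>
       (\<forall>e\<in># restrict_edges F (Inl ` V) - image_mset (image Inl) E. card e = 1) \<and>
       (\<forall>v\<in>U. D - C \<le> hdeg F v \<and> hdeg F v \<le> D) \<and>
       (\<forall>v\<in>V. hdeg E v \<ge> D - C \<longrightarrow> hdeg F (Inl v) = hdeg E v) \<and>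
       card U \<le> r * (r - 1)^2 * D^3 * N)"
proof (rule exI[of _ 0], rule exI[of _ 10], rule exI[of _ 1], intro allI impI)
  fix N D C :: nat and V :: "'a set" and E
  assume h0: "N \<ge> 0" and h: "C \<ge> 1" "D \<ge> 10" "card V = N" "linear_multi_hypergraph V E"
    "\<forall>v\<in>V. hdeg E v \<le> D" "\<forall>e\<in>#E. card e \<le> r"
  interpret constr r D C V E
    using assms h by unfold_locales auto
  show "\<exists>(U :: ('a + nat) set) F.
       linear_hypergraph U F \<and> uniform r F \<and> Inl ` V \<subseteq> U \<and>
       image_mset (image Inl) E \<subseteq># restrict_edges F (Inl ` V) \<and>
       (\<forall>e\<in># restrict_edges F (Inl ` V) - image_mset (image Inl) E. card e = 1) \<and>
       (\<forall>v\<in>U. D - C \<le> hdeg F v \<and> hdeg F v \<le> D) \<and>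
       (\<forall>v\<in>V. hdeg E v \<ge> D - C \<longrightarrow> hdeg F (Inl v) = hdeg E v) \<and>
       card U \<le> r * (r - 1)^2 * D^3 * N"
    using main h(3) by simp
qed

end
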